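(* $\widetilde{\mathbb{C}}=\widehat{\mathbb{C}}=\mathbb{Q}$.
   Context: Let $K$ be a field. For $r\in K$, a finite set $A(r)$ with $\{r\}\subseteq A(r)\subseteq K$ is called adequate for $r$ if every mapping $f:A(r)\to K$ satisfying (1) if $1\in A(r)$ then $f(1)=1$; (2) if $a,b\in A(r)$ and $a+b\in A(r)$ then $f(a+b)=f(a)+f(b)$; (3) if $a,b\in A(r)$ and $a\cdot b\in A(r)$ then $f(a\cdot b)=f(a)\cdot f(b)$, also satisfies $f(r)=r$. $\widetilde{K}$ denotes the set of all $r\in K$ for which some finite set adequate for $r$ exists. $\widehat{K}=\bigcap_{\sigma\in \mathrm{End}(K)}\{x\in K:\sigma(x)=x\}$, where $\mathrm{End}(K)$ is the set of all field endomorphisms of $K$. *)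

theory Defs
  imports Complex_Main
begin

definition respects_on :: "'a::field set \<Rightarrow> ('a \<Rightarrow> 'a) \<Rightarrow> bool" where
  "respects_on A f \<longleftrightarrow>
     (1 \<in> A \<longrightarrow> f 1 = 1) \<and>
     (\<forall>a\<in>A. \<forall>b\<in>A. a + b \<in> A \<longrightarrow> f (a + b) = f a + f b) \<and>
     (\<forall>a\<in>A. \<forall>b\<in>A. a * b \<in> A \<longrightarrow> f (a * b) = f a * f b)"

text \<open>A finite set A is adequate for r. Maps A -> K are represented by total
  functions K -> K; only their values on A matter.\<close>
definition adequate :: "'a::field \<Rightarrow> 'a set \<Rightarrow> bool" where
  "adequate r A \<longleftrightarrow> finite A \<and> r \<in> A \<and>
     (\<forall>f. respects_on A f \<longrightarrow> f r = r)"

definition tilde_set :: "'a::field set" where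
  "tilde_set = {r. \<exists>A. adequate r A}"

definition field_endo :: "('a::field \<Rightarrow> 'a) \<Rightarrow> bool" where
  "field_endo \<sigma> \<longleftrightarrow> \<sigma> 1 = 1 \<and> (\<forall>x y. \<sigma> (x + y) = \<sigma> x + \<sigma> y) \<and>
     (\<forall>x y. \<sigma> (x * y) = \<sigma> x * \<sigma> y)"

definition hat_set :: "'a::field set" where
  "hat_set = (\<Inter>\<sigma>\<in>{\<sigma>. field_endo \<sigma>}. {x. \<sigma> x = x})"

end

theory Submission
  imports Defs "HOL-Algebra.Algebraic_Closure_Type"
begin


abbreviation CR :: "complex ring" where "CR \<equiv> ring_of_type_algebra"

lemma CR_field: "field CR" by (rule field_from_type_algebra)

interpretation CR: domain CR by (rule field.axioms(1)[OF CR_field])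

lemma CR_simps[simp]: "carrier CR = UNIV" "monoid.mult CR = (*)" "add CR = (+)" "one CR = 1" "zero CR = 0"
  by (simp_all add: ring_of_type_algebra_def)

lemma CR_ainv[simp]: "a_inv CR x = - x"
  by (rule CR.minus_equality) auto

lemma CR_pow[simp]: "x [^]\<^bsub>CR\<^esub> (n::nat) = x ^ n"
  by (induction n) auto

lemma CR_minv[simp]: "x \<noteq> 0 \<Longrightarrow> m_inv CR x = inverse x"
  by (rule CR.comm_inv_char) auto

lemma CR_eval: "CR.eval p x = poly (Poly (rev p)) x"
proof (induction p)
  case Nil then show ?case by simp
next
  case (Cons a p)
  then show ?case by (simp add: Poly_snoc poly_monom)
qed

definition sf :: "complex set \<Rightarrow> bool" where
  "sf K \<longleftrightarrow> 0 \<in> K \<and> 1 \<in> K \<and> (\<forall>a\<in>K. \<forall>b\<in>K. a + b \<in> K \<and> a * b \<in> K) \<and> (\<forall>a\<in>K. - a \<in> K \<and> inverse a \<in> K)"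

definition ov :: "complex set \<Rightarrow> complex poly \<Rightarrow> bool" where
  "ov K q \<longleftrightarrow> (\<forall>i. coeff q i \<in> K)"

definition alg :: "complex set \<Rightarrow> complex \<Rightarrow> bool" where
  "alg K z \<longleftrightarrow> (\<exists>q. ov K q \<and> q \<noteq> 0 \<and> poly q z = 0)"

lemma sf_subfield: "sf K \<Longrightarrow> subfield K CR"
  apply (rule field.subfieldI'[OF CR_field])
   apply (rule CR.subringI)
  by (auto simp: sf_def)

lemma subfield_sf: "subfield K CR \<Longrightarrow> sf K"
proof -
  assume s: "subfield K CR"
  have r: "subring K CR" using subfieldE(1)[OF s] .
  have inv: "inverse a \<in> K" if "a \<in> K" for a
  proof (cases "a = 0")
    case True then show ?thesis using subringE(2)[OF r] by simp
  next
    case False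
    then show ?thesis using CR.subfield_m_inv(1)[OF s, of a] that by auto
  qed
  show ?thesis unfolding sf_def using subringE[OF r] inv by auto
qed

lemma alg_CR: "sf K \<Longrightarrow> alg K z \<longleftrightarrow> (CR.algebraic over K) z"
proof
  assume sK: "sf K" and "alg K z"
  then obtain q where q: "ov K q" "q \<noteq> 0" "poly q z = 0" unfolding alg_def by auto
  let ?p = "rev (coeffs q)"
  have "?p \<in> carrier (K[X]\<^bsub>CR\<^esub>)"
    unfolding univ_poly_def polynomial_def using q
    by (auto simp: hd_rev coeffs_def ov_def last_coeffs_eq_coeff_degree)
  moreover have "?p \<noteq> []" using q by simp
  moreover have "CR.eval ?p z = 0" using q by (simp add: CR_eval)
  ultimately show "(CR.algebraic over K) z" using CR.algebraicI by auto
next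
  assume sK: "sf K" and "(CR.algebraic over K) z"
  then obtain p where p: "p \<in> carrier (K[X]\<^bsub>CR\<^esub>)" "p \<noteq> []" "CR.eval p z = 0"
    using CR.algebraicE[OF subfieldE(1)[OF sf_subfield[OF sK]]] by auto
  let ?q = "Poly (rev p)"
  have "ov K ?q" using p sK unfolding ov_def univ_poly_def polynomial_def sf_def
    by (auto simp: nth_default_def) (metis length_rev nth_mem set_rev subsetD)
  moreover have "?q \<noteq> 0"
  proof
    assume "?q = 0"
    then have "coeff ?q (length p - 1) = 0" by simp
    moreover have "coeff ?q (length p - 1) = hd p" using p(2)
      by (simp add: nth_default_def hd_conv_nth rev_nth)
    ultimately show False using p unfolding univ_poly_def polynomial_def by auto
  qed
  ultimately show "alg K z" unfolding alg_def using p by (auto simp: CR_eval)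
qed

lemma acl_sf: "sf K \<Longrightarrow> sf {z. alg K z}"
proof -
  assume sK: "sf K"
  have "subfield {x \<in> carrier CR. (CR.algebraic over K) x} CR"
    using field.subfield_of_algebraics[OF CR_field sf_subfield[OF sK]] .
  moreover have "{x \<in> carrier CR. (CR.algebraic over K) x} = {z. alg K z}"
    using alg_CR[OF sK] by auto
  ultimately show ?thesis using subfield_sf by auto
qed

lemma alg_trans:
  assumes sK: "sf K" and q: "ov {z. alg K z} q" "q \<noteq> 0" "poly q y = 0"
  shows "alg K y"
proof -
  let ?cs = "coeffs q"
  have K: "subfield K CR" using sf_subfield[OF sK] .
  have cs: "set ?cs \<subseteq> carrier CR" by simp
  have csalg: "\<And>x. x \<in> set ?cs \<Longrightarrow> (CR.algebraic over K) x"
    using q(1) alg_CR[OF sK] unfolding ov_def by (auto simp: coeffs_def split: if_splits)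
  define F where "F = CR.finite_extension K ?cs"
  have F: "subfield F CR" unfolding F_def using CR.finite_extension_is_subfield[OF K cs] csalg by auto
  have Fd: "CR.finite_dimension K F" unfolding F_def
    using CR.finite_extension_finite_dimension(1)[OF K cs] csalg by auto
  have csF: "set ?cs \<subseteq> F" unfolding F_def using CR.finite_extension_mem[OF subfieldE(1)[OF K] cs] .
  have sF: "sf F" using subfield_sf[OF F] .
  have "ov F q" unfolding ov_def
  proof
    fix i show "coeff q i \<in> F"
    proof (cases "i \<le> degree q")
      case True
      then have "coeff q i \<in> set ?cs" using q(2)
        unfolding coeffs_def by (auto simp del: upt_Suc)
      then show ?thesis using csF by auto
    next
      case False then show ?thesis using sF by (simp add: sf_def coeff_eq_0)
    qed
  qed
  then have "alg F y" unfolding alg_def using q by auto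
  then have yF: "(CR.algebraic over F) y" using alg_CR[OF sF] by auto
  have "CR.finite_dimension F (CR.simple_extension F y)"
    using CR.finite_dimension_simple_extension[OF F] yF by auto
  then have "CR.finite_dimension K (CR.simple_extension F y)"
    using CR.telescopic_base_dim(1)[OF K F Fd] by auto
  then have "(CR.algebraic over K) y"
    using CR.finite_dimension_imp_algebraic[OF K CR.simple_extension_is_subring[OF subfieldE(1)[OF F]]]
      CR.simple_extension_mem[OF subfieldE(1)[OF F]] by auto
  then show ?thesis using alg_CR[OF sK] by auto
qed



lemma sfD:
  assumes "sf K"
  shows "0 \<in> K" "1 \<in> K" "a \<in> K \<Longrightarrow> b \<in> K \<Longrightarrow> a + b \<in> K"
    "a \<in> K \<Longrightarrow> b \<in> K \<Longrightarrow> a * b \<in> K" "a \<in> K \<Longrightarrow> - a \<in> K"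
    "a \<in> K \<Longrightarrow> inverse a \<in> K" "a \<in> K \<Longrightarrow> b \<in> K \<Longrightarrow> a - b \<in> K"
    "a \<in> K \<Longrightarrow> b \<in> K \<Longrightarrow> a / b \<in> K"
proof -
  show "0 \<in> K" "1 \<in> K" using assms unfolding sf_def by auto
  show "a \<in> K \<Longrightarrow> b \<in> K \<Longrightarrow> a + b \<in> K" "a \<in> K \<Longrightarrow> b \<in> K \<Longrightarrow> a * b \<in> K"
    "a \<in> K \<Longrightarrow> - a \<in> K" "a \<in> K \<Longrightarrow> inverse a \<in> K" using assms unfolding sf_def by auto
  show "a \<in> K \<Longrightarrow> b \<in> K \<Longrightarrow> a - b \<in> K" using assms unfolding sf_def
    by (metis diff_conv_add_uminus)
  show "a \<in> K \<Longrightarrow> b \<in> K \<Longrightarrow> a / b \<in> K" using assms unfolding sf_def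
    by (metis divide_inverse)
qed

lemma sf_sum: "sf K \<Longrightarrow> (\<And>i. i \<in> S \<Longrightarrow> f i \<in> K) \<Longrightarrow> sum f S \<in> K"
  by (induction S rule: infinite_finite_induct) (auto intro: sfD)

lemma sf_pow: "sf K \<Longrightarrow> a \<in> K \<Longrightarrow> a ^ n \<in> K"
  by (induction n) (auto intro: sfD)

lemma sf_of_nat: "sf K \<Longrightarrow> of_nat n \<in> K"
  by (induction n) (auto intro: sfD)

lemma sf_Rats: "sf \<rat>"
  unfolding sf_def by auto

lemma ov_mono: "ov K q \<Longrightarrow> K \<subseteq> L \<Longrightarrow> ov L q"
  unfolding ov_def by auto

lemma ov_0: "sf K \<Longrightarrow> ov K 0" unfolding ov_def by (auto intro: sfD)
lemma ov_const: "sf K \<Longrightarrow> c \<in> K \<Longrightarrow> ov K [:c:]" unfolding ov_def by (auto intro: sfD simp: coeff_pCons split: nat.splits)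
lemma ov_1: "sf K \<Longrightarrow> ov K 1" unfolding ov_def by (auto intro: sfD simp: coeff_1)
lemma ov_pCons: "sf K \<Longrightarrow> c \<in> K \<Longrightarrow> ov K p \<Longrightarrow> ov K (pCons c p)"
  unfolding ov_def by (auto simp: coeff_pCons split: nat.splits)
lemma ov_add: "sf K \<Longrightarrow> ov K p \<Longrightarrow> ov K q \<Longrightarrow> ov K (p + q)"
  unfolding ov_def by (auto intro: sfD)
lemma ov_uminus: "sf K \<Longrightarrow> ov K p \<Longrightarrow> ov K (- p)"
  unfolding ov_def by (auto intro: sfD)
lemma ov_diff: "sf K \<Longrightarrow> ov K p \<Longrightarrow> ov K q \<Longrightarrow> ov K (p - q)"
  unfolding ov_def by (auto intro: sfD)
lemma ov_mult: "sf K \<Longrightarrow> ov K p \<Longrightarrow> ov K q \<Longrightarrow> ov K (p * q)"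
  unfolding ov_def coeff_mult by (auto intro!: sf_sum sfD)
lemma ov_smult: "sf K \<Longrightarrow> c \<in> K \<Longrightarrow> ov K p \<Longrightarrow> ov K (smult c p)"
  unfolding ov_def by (auto intro: sfD)
lemma ov_monom: "sf K \<Longrightarrow> c \<in> K \<Longrightarrow> ov K (monom c n)"
  unfolding ov_def by (auto intro: sfD simp: coeff_monom)
lemma ov_pderiv: "sf K \<Longrightarrow> ov K p \<Longrightarrow> ov K (pderiv p)"
  unfolding ov_def by (auto intro!: sfD sf_of_nat simp: coeff_pderiv)
lemma ov_pcompose: "sf K \<Longrightarrow> ov K p \<Longrightarrow> ov K r \<Longrightarrow> ov K (pcompose p r)"
proof (induction p)
  case 0 then show ?case by (simp add: ov_0)
next
  case (pCons a p)
  have "a \<in> K" "ov K p" using pCons.prems unfolding ov_def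
    by (metis coeff_pCons_0, metis coeff_pCons_Suc)
  then show ?case using pCons by (auto simp: pcompose_pCons intro!: ov_add ov_mult ov_const)
qed

lemma poly_in: "sf K \<Longrightarrow> ov K q \<Longrightarrow> z \<in> K \<Longrightarrow> poly q z \<in> K"
  unfolding poly_altdef ov_def by (auto intro!: sf_sum sfD sf_pow)

definition hom_on :: "complex set \<Rightarrow> (complex \<Rightarrow> complex) \<Rightarrow> bool" where
  "hom_on K s \<longleftrightarrow> s 1 = 1 \<and> (\<forall>a\<in>K. \<forall>b\<in>K. s (a + b) = s a + s b \<and> s (a * b) = s a * s b)"

lemma hom_0: "sf K \<Longrightarrow> hom_on K s \<Longrightarrow> s 0 = 0"
proof -
  assume "sf K" "hom_on K s"
  then have "s (0 + 0) = s 0 + s 0" unfolding hom_on_def using sfD(1) by blast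
  then show ?thesis by simp
qed

lemma hom_add: "hom_on K s \<Longrightarrow> a \<in> K \<Longrightarrow> b \<in> K \<Longrightarrow> s (a + b) = s a + s b"
  unfolding hom_on_def by auto
lemma hom_mult: "hom_on K s \<Longrightarrow> a \<in> K \<Longrightarrow> b \<in> K \<Longrightarrow> s (a * b) = s a * s b"
  unfolding hom_on_def by auto
lemma hom_1: "hom_on K s \<Longrightarrow> s 1 = 1"
  unfolding hom_on_def by auto

lemma hom_uminus: "sf K \<Longrightarrow> hom_on K s \<Longrightarrow> a \<in> K \<Longrightarrow> s (- a) = - s a"
proof -
  assume h: "sf K" "hom_on K s" "a \<in> K"
  then have "s (a + - a) = s a + s (- a)" using hom_add sfD(5) by blast
  then have "s a + s (- a) = 0" using hom_0[OF h(1,2)] by simp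
  then show ?thesis by (simp add: add_eq_0_iff2)
qed

lemma hom_diff: "sf K \<Longrightarrow> hom_on K s \<Longrightarrow> a \<in> K \<Longrightarrow> b \<in> K \<Longrightarrow> s (a - b) = s a - s b"
  using hom_add[of K s a "- b"] hom_uminus[of K s b] sfD(5)[of K b] by simp

lemma hom_inverse: "sf K \<Longrightarrow> hom_on K s \<Longrightarrow> a \<in> K \<Longrightarrow> s (inverse a) = inverse (s a)"
proof (cases "a = 0")
  case True
  assume "sf K" "hom_on K s" "a \<in> K" then show ?thesis using True hom_0[of K s] by simp
next
  case False
  assume h: "sf K" "hom_on K s" "a \<in> K"
  then have "s (a * inverse a) = s a * s (inverse a)" using hom_mult sfD(6) by blast
  then have "s a * s (inverse a) = 1" using False hom_1[OF h(2)] by simp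
  then show ?thesis by (simp add: inverse_unique)
qed

lemma hom_inj0: "sf K \<Longrightarrow> hom_on K s \<Longrightarrow> a \<in> K \<Longrightarrow> s a = 0 \<Longrightarrow> a = 0"
proof (rule ccontr)
  assume h: "sf K" "hom_on K s" "a \<in> K" "s a = 0" "a \<noteq> 0"
  then have "s (a * inverse a) = s a * s (inverse a)" using hom_mult sfD(6) by blast
  then show False using h hom_1[OF h(2)] by simp
qed

lemma hom_sum: "sf K \<Longrightarrow> hom_on K s \<Longrightarrow> (\<And>i. i \<in> S \<Longrightarrow> f i \<in> K) \<Longrightarrow> s (sum f S) = (\<Sum>i\<in>S. s (f i))"
proof (induction S rule: infinite_finite_induct)
  case (infinite A) then show ?case using hom_0 by simp
next
  case empty then show ?case using hom_0 by simp
next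
  case (insert x F)
  then show ?case by (simp add: hom_add sf_sum)
qed

abbreviation pm :: "(complex \<Rightarrow> complex) \<Rightarrow> complex poly \<Rightarrow> complex poly" where
  "pm s q \<equiv> map_poly s q"

lemma pm_coeff: "sf K \<Longrightarrow> hom_on K s \<Longrightarrow> coeff (pm s q) i = s (coeff q i)"
  using hom_0 by (simp add: coeff_map_poly)

lemma pm_add: "sf K \<Longrightarrow> hom_on K s \<Longrightarrow> ov K p \<Longrightarrow> ov K q \<Longrightarrow> pm s (p + q) = pm s p + pm s q"
  by (rule poly_eqI) (simp add: pm_coeff hom_add ov_def)

lemma pm_diff: "sf K \<Longrightarrow> hom_on K s \<Longrightarrow> ov K p \<Longrightarrow> ov K q \<Longrightarrow> pm s (p - q) = pm s p - pm s q"
  by (rule poly_eqI) (simp add: pm_coeff hom_diff ov_def)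

lemma pm_mult: "sf K \<Longrightarrow> hom_on K s \<Longrightarrow> ov K p \<Longrightarrow> ov K q \<Longrightarrow> pm s (p * q) = pm s p * pm s q"
  by (rule poly_eqI) (simp add: pm_coeff coeff_mult hom_sum hom_mult ov_def sfD)

lemma pm_const: "sf K \<Longrightarrow> hom_on K s \<Longrightarrow> pm s [:c:] = [:s c:]"
  by (rule poly_eqI) (simp add: pm_coeff coeff_pCons hom_0 split: nat.splits)

lemma pm_1: "sf K \<Longrightarrow> hom_on K s \<Longrightarrow> pm s 1 = 1"
  using pm_const[of K s 1] hom_1[of K s] by (simp add: one_pCons)

lemma pm_eq0: "sf K \<Longrightarrow> hom_on K s \<Longrightarrow> ov K q \<Longrightarrow> pm s q = 0 \<longleftrightarrow> q = 0"
proof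
  assume h: "sf K" "hom_on K s" "ov K q" "pm s q = 0"
  show "q = 0"
  proof (rule poly_eqI)
    fix n
    have "s (coeff q n) = 0" using h pm_coeff[OF h(1,2), of q n] by simp
    then show "coeff q n = coeff 0 n" using hom_inj0[OF h(1,2)] h(3) unfolding ov_def by auto
  qed
qed simp

lemma pm_degree: "sf K \<Longrightarrow> hom_on K s \<Longrightarrow> ov K q \<Longrightarrow> degree (pm s q) = degree q"
proof -
  assume h: "sf K" "hom_on K s" "ov K q"
  show ?thesis
  proof (cases "q = 0")
    case True then show ?thesis by simp
  next
    case False
    then have "s (lead_coeff q) \<noteq> 0" using hom_inj0[OF h(1,2)] h(3) unfolding ov_def by (metis leading_coeff_0_iff)
    then show ?thesis by (rule map_poly_degree_eq)
  qed
qed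

lemma pm_ov: "sf K \<Longrightarrow> hom_on K s \<Longrightarrow> s ` K \<subseteq> F \<Longrightarrow> ov K q \<Longrightarrow> ov F (pm s q)"
  unfolding ov_def by (auto simp: pm_coeff)

lemma pm_id: "pm id q = q" by (simp add: map_poly_id)



lemma ov_div:
  assumes sK: "sf K" and p: "ov K p" "p \<noteq> 0" and q: "ov K q"
  shows "\<exists>s r. ov K s \<and> ov K r \<and> q = p * s + r \<and> (r = 0 \<or> degree r < degree p)"
  using q
proof (induction "degree q" arbitrary: q rule: less_induct)
  case less
  show ?case
  proof (cases "q = 0 \<or> degree q < degree p")
    case True
    then show ?thesis
    proof
      assume "q = 0" then show ?thesis using ov_0[OF sK] by (intro exI[of _ 0]) auto
    next
      assume "degree q < degree p" then show ?thesis using less.prems ov_0[OF sK]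
        by (intro exI[of _ 0] exI[of _ q]) auto
    qed
  next
    case False
    then have qnz: "q \<noteq> 0" and dq: "degree p \<le> degree q" by auto
    define d where "d = degree q - degree p"
    define c where "c = lead_coeff q / lead_coeff p"
    define q' where "q' = q - monom c d * p"
    have cK: "c \<in> K" unfolding c_def using sfD(8)[OF sK] less.prems p(1) unfolding ov_def by blast
    have c0: "c \<noteq> 0" unfolding c_def using qnz p(2) by simp
    have ovq': "ov K q'" unfolding q'_def
      using ov_diff[OF sK less.prems ov_mult[OF sK ov_monom[OF sK cK] p(1)]] .
    have dm: "degree (monom c d * p) = degree q"
      using c0 p(2) dq unfolding d_def by (simp add: degree_mult_eq degree_monom_eq)
    have dd: "d + degree p = degree q" unfolding d_def using dq by simp
    have "coeff (monom c d * p) (d + degree p) = c * lead_coeff p"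
      by (simp add: coeff_monom_mult)
    then have "coeff (monom c d * p) (degree q) = c * lead_coeff p" using dd by simp
    then have cq: "coeff q' (degree q) = 0" unfolding q'_def c_def using p(2) by simp
    have dle: "degree q' \<le> degree q" unfolding q'_def
      by (rule degree_diff_le) (simp_all add: dm)
    have q'cases: "q' = 0 \<or> degree q' < degree q"
    proof (rule ccontr)
      assume "\<not> (q' = 0 \<or> degree q' < degree q)"
      then have "q' \<noteq> 0" "degree q' = degree q" using dle by auto
      then show False using cq by (metis leading_coeff_0_iff)
    qed
    show ?thesis
    proof (cases "q' = 0")
      case True
      then have "q = p * monom c d + 0" unfolding q'_def by (simp add: mult.commute)
      then show ?thesis using ov_monom[OF sK cK] ov_0[OF sK] by blast
    next
      case False
      then have "degree q' < degree q" using q'cases by auto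
      then obtain s r where sr: "ov K s" "ov K r" "q' = p * s + r" "r = 0 \<or> degree r < degree p"
        using less.hyps[OF _ ovq'] by blast
      have "q = p * (s + monom c d) + r" using sr(3) unfolding q'_def by (simp add: algebra_simps)
      then show ?thesis using sr ov_add[OF sK sr(1) ov_monom[OF sK cK]] by blast
    qed
  qed
qed

lemma alg_equiv:
  assumes sK: "sf K" and hs: "hom_on K s" and p: "ov K p" "p \<noteq> 0" "poly p x = 0"
    and pmin: "\<And>q. ov K q \<Longrightarrow> q \<noteq> 0 \<Longrightarrow> poly q x = 0 \<Longrightarrow> degree p \<le> degree q"
    and y: "poly (pm s p) y = 0" and q: "ov K q"
  shows "poly q x = 0 \<longleftrightarrow> poly (pm s q) y = 0"
proof -
  define E where "E a = poly (pm s a) y" for a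
  have Eadd: "E (a + b) = E a + E b" if "ov K a" "ov K b" for a b
    unfolding E_def using pm_add[OF sK hs that] by simp
  have Emult: "E (a * b) = E a * E b" if "ov K a" "ov K b" for a b
    unfolding E_def using pm_mult[OF sK hs that] by simp
  have fwd: "E q = 0" if qK: "ov K q" and qx: "poly q x = 0" for q
  proof -
    obtain t r where tr: "ov K t" "ov K r" "q = p * t + r" "r = 0 \<or> degree r < degree p"
      using ov_div[OF sK p(1,2) qK] by blast
    have "poly r x = 0" using qx tr(3) p(3) by simp
    then have "r = 0" using tr(4) pmin[OF tr(2)] by fastforce
    then show ?thesis using tr(3) Emult[OF p(1) tr(1)] y unfolding E_def by simp
  qed
  define J where "J = {a. ov K a \<and> a \<noteq> 0 \<and> E a = 0}"
  have pJ: "p \<in> J" unfolding J_def E_def using p y by auto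
  obtain t where t: "t \<in> J" and tmin: "\<And>a. a \<in> J \<Longrightarrow> degree t \<le> degree a"
    using ex_has_least_nat[of "\<lambda>a. a \<in> J" p degree] pJ by blast
  have tK: "ov K t" "t \<noteq> 0" "E t = 0" using t unfolding J_def by auto
  have tdvd: "\<exists>u. ov K u \<and> a = t * u" if aK: "ov K a" "E a = 0" for a
  proof -
    obtain u r where ur: "ov K u" "ov K r" "a = t * u + r" "r = 0 \<or> degree r < degree t"
      using ov_div[OF sK tK(1,2) aK(1)] by blast
    have "E a = E t * E u + E r" using ur(3) Eadd[OF ov_mult[OF sK tK(1) ur(1)] ur(2)] Emult[OF tK(1) ur(1)] by simp
    then have "E r = 0" using aK(2) tK(3) by simp
    then have "r = 0" using ur(2,4) tmin[of r] unfolding J_def by fastforce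
    then show ?thesis using ur by auto
  qed
  have tx: "poly t x = 0"
  proof (rule ccontr)
    assume ntx: "poly t x \<noteq> 0"
    obtain u where u: "ov K u" "p = t * u" using tdvd[OF p(1)] pJ unfolding J_def by auto
    have unz: "u \<noteq> 0" using u(2) p(2) by auto
    have ux: "poly u x = 0" using p(3) u(2) ntx by simp
    have dt: "degree t \<noteq> 0"
    proof
      assume "degree t = 0"
      then obtain c where "t = [:c:]" by (metis degree_eq_zeroE)
      then have "E t = s c" unfolding E_def using pm_const[OF sK hs] by simp
      moreover have "c \<in> K" using tK(1) \<open>t = [:c:]\<close> unfolding ov_def by (metis coeff_pCons_0)
      moreover have "c \<noteq> 0" using tK(2) \<open>t = [:c:]\<close> by simp
      ultimately show False using tK(3) hom_inj0[OF sK hs] by auto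
    qed
    have "degree p = degree t + degree u" using u(2) tK(2) unz by (simp add: degree_mult_eq)
    then have "degree u < degree p" using dt by simp
    then show False using pmin[OF u(1) unz ux] by simp
  qed
  show ?thesis
  proof
    assume "poly q x = 0" then show "poly (pm s q) y = 0" using fwd[OF q] unfolding E_def by simp
  next
    assume "poly (pm s q) y = 0"
    then obtain u where "q = t * u" using tdvd[OF q] unfolding E_def by auto
    then show "poly q x = 0" using tx by simp
  qed
qed



lemma ext_step:
  assumes sK: "sf K" and hs: "hom_on K s"
    and eq: "\<And>q. ov K q \<Longrightarrow> (poly q x = 0 \<longleftrightarrow> poly (pm s q) y = 0)"
  obtains L t where "sf L" "K \<subseteq> L" "x \<in> L" "hom_on L t" "\<And>k. k \<in> K \<Longrightarrow> t k = s k" "t x = y"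
    "\<And>F. sf F \<Longrightarrow> s ` K \<subseteq> F \<Longrightarrow> y \<in> F \<Longrightarrow> t ` L \<subseteq> F"
proof -
  define E where "E a = poly (pm s a) y" for a
  define R where "R v w \<longleftrightarrow> (\<exists>a b. ov K a \<and> ov K b \<and> poly b x \<noteq> 0 \<and> v = poly a x / poly b x \<and> w = E a / E b)" for v w
  define L where "L = {v. \<exists>w. R v w}"
  define t where "t v = (SOME w. R v w)" for v
  have Eadd: "E (a + b) = E a + E b" if "ov K a" "ov K b" for a b
    unfolding E_def using pm_add[OF sK hs that] by simp
  have Ediff: "E (a - b) = E a - E b" if "ov K a" "ov K b" for a b
    unfolding E_def using pm_diff[OF sK hs that] by simp
  have Emult: "E (a * b) = E a * E b" if "ov K a" "ov K b" for a b
    unfolding E_def using pm_mult[OF sK hs that] by simp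
  have Econst: "E [:c:] = s c" for c unfolding E_def using pm_const[OF sK hs] by simp
  have E1: "E 1 = 1" unfolding E_def using pm_1[OF sK hs] by simp
  have Enz: "E b \<noteq> 0" if "ov K b" "poly b x \<noteq> 0" for b
    using eq[OF that(1)] that(2) unfolding E_def by simp
  have wd: "w1 = w2" if r12: "R v w1" "R v w2" for v w1 w2
  proof -
    obtain a b where ab: "ov K a" "ov K b" "poly b x \<noteq> 0" "v = poly a x / poly b x" "w1 = E a / E b"
      using r12(1) unfolding R_def by blast
    obtain c d where cd: "ov K c" "ov K d" "poly d x \<noteq> 0" "v = poly c x / poly d x" "w2 = E c / E d"
      using r12(2) unfolding R_def by blast
    have "poly a x * poly d x = poly c x * poly b x" using ab(3,4) cd(3,4)
      by (simp add: frac_eq_eq)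
    then have "poly (a * d - c * b) x = 0" by simp
    moreover have ov1: "ov K (a * d - c * b)" using ab cd sK by (simp add: ov_diff ov_mult)
    ultimately have "E (a * d - c * b) = 0" using eq[OF ov1] unfolding E_def by simp
    then have "E a * E d = E c * E b"
      using Ediff[OF ov_mult[OF sK ab(1) cd(2)] ov_mult[OF sK cd(1) ab(2)]]
        Emult[OF ab(1) cd(2)] Emult[OF cd(1) ab(2)] by simp
    then show ?thesis using ab(5) cd(5) Enz[OF ab(2,3)] Enz[OF cd(2,3)] by (simp add: frac_eq_eq)
  qed
  have Rt: "t v = w" if "R v w" for v w
    unfolding t_def using that wd by (metis someI)
  have trep: "t (poly a x / poly b x) = E a / E b" if "ov K a" "ov K b" "poly b x \<noteq> 0" for a b
    using Rt that unfolding R_def by blast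
  have inL: "poly a x / poly b x \<in> L" if "ov K a" "ov K b" "poly b x \<noteq> 0" for a b
    using that unfolding L_def R_def by blast
  have Lrep: "\<exists>a b. ov K a \<and> ov K b \<and> poly b x \<noteq> 0 \<and> v = poly a x / poly b x" if "v \<in> L" for v
    using that unfolding L_def R_def by blast
  have ov1: "ov K 1" using ov_1[OF sK] .
  have KL: "K \<subseteq> L"
  proof
    fix k assume "k \<in> K"
    then have "poly [:k:] x / poly 1 x \<in> L" using inL[OF ov_const[OF sK] ov1] by simp
    then show "k \<in> L" by simp
  qed
  have tK: "t k = s k" if "k \<in> K" for k
    using trep[OF ov_const[OF sK that] ov1] Econst E1 by simp
  have ovX: "ov K [:0, 1:]" using ov_pCons[OF sK sfD(1)[OF sK] ov1] by (simp add: one_pCons)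
  have xL: "x \<in> L" using inL[OF ovX ov1] by simp
  have EX: "E [:0, 1:] = y"
  proof -
    have "pm s [:0, 1:] = [:0, 1:]" using hom_0[OF sK hs] hom_1[OF hs] by (simp add: map_poly_pCons)
    then show ?thesis unfolding E_def by simp
  qed
  have tx: "t x = y" using trep[OF ovX ov1] EX E1 by simp
  have sL: "sf L" unfolding sf_def
  proof (intro conjI ballI)
    show "0 \<in> L" using KL sfD(1)[OF sK] by auto
    show "1 \<in> L" using KL sfD(2)[OF sK] by auto
  next
    fix v w assume v: "v \<in> L" and w: "w \<in> L"
    obtain a b where ab: "ov K a" "ov K b" "poly b x \<noteq> 0" "v = poly a x / poly b x" using Lrep[OF v] by blast
    obtain c d where cd: "ov K c" "ov K d" "poly d x \<noteq> 0" "w = poly c x / poly d x" using Lrep[OF w] by blast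
    have e1: "v + w = poly (a * d + c * b) x / poly (b * d) x" using ab cd by (simp add: add_frac_eq)
    have "poly (a * d + c * b) x / poly (b * d) x \<in> L"
      by (rule inL) (use ab cd sK in \<open>simp_all add: ov_add ov_mult\<close>)
    then show "v + w \<in> L" using e1 by simp
    have e2: "v * w = poly (a * c) x / poly (b * d) x" using ab cd by simp
    have "poly (a * c) x / poly (b * d) x \<in> L"
      by (rule inL) (use ab cd sK in \<open>simp_all add: ov_mult\<close>)
    then show "v * w \<in> L" using e2 by simp
  next
    fix v assume v: "v \<in> L"
    obtain a b where ab: "ov K a" "ov K b" "poly b x \<noteq> 0" "v = poly a x / poly b x" using Lrep[OF v] by blast
    have e3: "- v = poly (- a) x / poly b x" using ab by simp
    have "poly (- a) x / poly b x \<in> L"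
      by (rule inL) (use ab sK in \<open>simp_all add: ov_uminus\<close>)
    then show "- v \<in> L" using e3 by simp
    show "inverse v \<in> L"
    proof (cases "poly a x = 0")
      case True
      then have "inverse v = 0" using ab by simp
      then show ?thesis using KL sfD(1)[OF sK] by auto
    next
      case False
      then have "inverse v = poly b x / poly a x" using ab by simp
      moreover have "poly b x / poly a x \<in> L" by (rule inL) (use ab False in auto)
      ultimately show ?thesis by simp
    qed
  qed
  have hL: "hom_on L t" unfolding hom_on_def
  proof (intro conjI ballI)
    show "t 1 = 1" using tK[OF sfD(2)[OF sK]] hom_1[OF hs] by simp
  next
    fix v w assume v: "v \<in> L" and w: "w \<in> L"
    obtain a b where ab: "ov K a" "ov K b" "poly b x \<noteq> 0" "v = poly a x / poly b x" using Lrep[OF v] by blast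
    obtain c d where cd: "ov K c" "ov K d" "poly d x \<noteq> 0" "w = poly c x / poly d x" using Lrep[OF w] by blast
    have o1: "ov K (a * d + c * b)" "ov K (b * d)" "ov K (a * c)" using ab cd sK by (simp_all add: ov_add ov_mult)
    have bd: "poly (b * d) x \<noteq> 0" using ab cd by simp
    have Ebd: "E (b * d) = E b * E d" using Emult ab cd by simp
    have "v + w = poly (a * d + c * b) x / poly (b * d) x" using ab cd by (simp add: add_frac_eq)
    then have "t (v + w) = E (a * d + c * b) / E (b * d)" using trep[OF o1(1,2) bd] by simp
    also have "\<dots> = (E a * E d + E c * E b) / (E b * E d)"
      using Eadd[OF ov_mult[OF sK ab(1) cd(2)] ov_mult[OF sK cd(1) ab(2)]] Emult ab cd Ebd by simp
    also have "\<dots> = E a / E b + E c / E d" using Enz[OF ab(2,3)] Enz[OF cd(2,3)] by (simp add: add_frac_eq)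
    also have "\<dots> = t v + t w" using trep ab cd by simp
    finally show "t (v + w) = t v + t w" .
    have "v * w = poly (a * c) x / poly (b * d) x" using ab cd by simp
    then have "t (v * w) = E (a * c) / E (b * d)" using trep[OF o1(3,2) bd] by simp
    also have "\<dots> = (E a / E b) * (E c / E d)" using Emult ab cd Ebd by simp
    also have "\<dots> = t v * t w" using trep ab cd by simp
    finally show "t (v * w) = t v * t w" .
  qed
  have img: "t ` L \<subseteq> F" if sF: "sf F" and sKF: "s ` K \<subseteq> F" and yF: "y \<in> F" for F
  proof
    fix z assume "z \<in> t ` L"
    then obtain v where v: "v \<in> L" "z = t v" by blast
    obtain a b where ab: "ov K a" "ov K b" "poly b x \<noteq> 0" "v = poly a x / poly b x" using Lrep[OF v(1)] by blast
    have "E a \<in> F" "E b \<in> F" unfolding E_def using poly_in[OF sF pm_ov[OF sK hs sKF] yF] ab by auto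
    then show "z \<in> F" using v(2) ab trep sfD(8)[OF sF] by simp
  qed
  show ?thesis using that[OF sL KL xL hL tK tx img] .
qed



definition fn :: "(complex \<times> complex) set \<Rightarrow> complex \<Rightarrow> complex" where
  "fn G k = (SOME v. (k, v) \<in> G)"

definition functional :: "(complex \<times> complex) set \<Rightarrow> bool" where
  "functional G \<longleftrightarrow> (\<forall>k v w. (k, v) \<in> G \<longrightarrow> (k, w) \<in> G \<longrightarrow> v = w)"

definition good :: "(complex \<times> complex) set \<Rightarrow> bool" where
  "good G \<longleftrightarrow> functional G \<and> sf (Domain G) \<and> hom_on (Domain G) (fn G) \<and>
     (\<forall>k\<in>Domain G. alg (Domain G) (fn G k))"

definition gr :: "complex set \<Rightarrow> (complex \<Rightarrow> complex) \<Rightarrow> (complex \<times> complex) set" where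
  "gr K t = (\<lambda>k. (k, t k)) ` K"

lemma fn_eq: "functional G \<Longrightarrow> (k, v) \<in> G \<Longrightarrow> fn G k = v"
  unfolding functional_def fn_def by (metis someI)

lemma fn_mem: "k \<in> Domain G \<Longrightarrow> (k, fn G k) \<in> G"
  unfolding fn_def by (metis DomainE someI)

lemma gr_Domain: "Domain (gr K t) = K" unfolding gr_def by force
lemma gr_functional: "functional (gr K t)" unfolding gr_def functional_def by auto
lemma gr_fn: "k \<in> K \<Longrightarrow> fn (gr K t) k = t k"
  by (rule fn_eq[OF gr_functional]) (auto simp: gr_def)

lemma hom_on_cong: "sf K \<Longrightarrow> hom_on K f \<Longrightarrow> (\<And>k. k \<in> K \<Longrightarrow> g k = f k) \<Longrightarrow> hom_on K g"
  unfolding hom_on_def using sfD(2,3,4)[of K] by auto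

lemma alg_self: "sf K \<Longrightarrow> k \<in> K \<Longrightarrow> alg K k"
  unfolding alg_def
  by (rule exI[of _ "[:- k, 1:]"]) (auto intro!: ov_pCons ov_0 sfD)

lemma alg_mono: "K \<subseteq> L \<Longrightarrow> alg K z \<Longrightarrow> alg L z"
  unfolding alg_def using ov_mono by blast

lemma good_gr: "sf K \<Longrightarrow> hom_on K t \<Longrightarrow> (\<And>k. k \<in> K \<Longrightarrow> alg K (t k)) \<Longrightarrow> good (gr K t)"
  unfolding good_def using gr_functional gr_Domain gr_fn hom_on_cong[of K t "fn (gr K t)"] by auto

lemma goodD:
  assumes "good G"
  shows "functional G" "sf (Domain G)" "hom_on (Domain G) (fn G)"
    "\<And>k. k \<in> Domain G \<Longrightarrow> alg (Domain G) (fn G k)"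
  using assms unfolding good_def by auto

lemma extend_good:
  assumes g: "good G"
    and eq: "\<And>q. ov (Domain G) q \<Longrightarrow> (poly q x = 0 \<longleftrightarrow> poly (pm (fn G) q) y = 0)"
    and yalg: "\<And>L. sf L \<Longrightarrow> Domain G \<subseteq> L \<Longrightarrow> x \<in> L \<Longrightarrow> alg L y"
  shows "\<exists>G'. good G' \<and> G \<subseteq> G' \<and> (x, y) \<in> G'"
proof -
  let ?K = "Domain G" and ?s = "fn G"
  obtain L t where Lt: "sf L" "?K \<subseteq> L" "x \<in> L" "hom_on L t" "\<And>k. k \<in> ?K \<Longrightarrow> t k = ?s k" "t x = y"
    "\<And>F. sf F \<Longrightarrow> ?s ` ?K \<subseteq> F \<Longrightarrow> y \<in> F \<Longrightarrow> t ` L \<subseteq> F"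
    using ext_step[OF goodD(2,3)[OF g] eq] by metis
  have F: "sf {z. alg L z}" using acl_sf[OF Lt(1)] .
  have "?s ` ?K \<subseteq> {z. alg L z}" using goodD(4)[OF g] alg_mono[OF Lt(2)] by auto
  moreover have "y \<in> {z. alg L z}" using yalg[OF Lt(1,2,3)] by simp
  ultimately have img: "t ` L \<subseteq> {z. alg L z}" using Lt(7)[OF F] by blast
  have "good (gr L t)" using good_gr[OF Lt(1,4)] img by auto
  moreover have "G \<subseteq> gr L t"
  proof
    fix p assume p: "p \<in> G"
    obtain k v where kv: "p = (k, v)" by fastforce
    have k: "k \<in> ?K" using p kv by auto
    have "v = ?s k" using fn_eq[OF goodD(1)[OF g]] p kv by auto
    then have "t k = v" using Lt(5)[OF k] by simp
    moreover have "k \<in> L" using k Lt(2) by auto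
    ultimately show "p \<in> gr L t" using kv unfolding gr_def by force
  qed
  moreover have "(x, y) \<in> gr L t" using Lt(3,6) unfolding gr_def by force
  ultimately show ?thesis by blast
qed

lemma next_step:
  assumes g: "good G"
  shows "\<exists>G'. good G' \<and> G \<subseteq> G' \<and> x \<in> Domain G'"
proof -
  let ?K = "Domain G" and ?s = "fn G"
  have sK: "sf ?K" and hs: "hom_on ?K ?s" using goodD[OF g] by auto
  have sacl: "?s ` ?K \<subseteq> {z. alg ?K z}" using goodD(4)[OF g] by auto
  show ?thesis
  proof (cases "alg ?K x")
    case True
    then obtain p0 where "ov ?K p0 \<and> p0 \<noteq> 0 \<and> poly p0 x = 0" unfolding alg_def by blast
    then obtain p where p: "ov ?K p" "p \<noteq> 0" "poly p x = 0"
      and pmin: "\<And>q. ov ?K q \<Longrightarrow> q \<noteq> 0 \<Longrightarrow> poly q x = 0 \<Longrightarrow> degree p \<le> degree q"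
      using ex_has_least_nat[of "\<lambda>q. ov ?K q \<and> q \<noteq> 0 \<and> poly q x = 0" p0 degree] by blast
    have dp: "degree p \<noteq> 0"
    proof
      assume "degree p = 0"
      then obtain c where "p = [:c:]" by (metis degree_eq_zeroE)
      then show False using p by simp
    qed
    then have "degree (pm ?s p) \<noteq> 0" using pm_degree[OF sK hs p(1)] by simp
    then have "\<not> constant (poly (pm ?s p))" using constant_degree[of "pm ?s p"] by metis
    then obtain y where y: "poly (pm ?s p) y = 0"
      using fundamental_theorem_of_algebra by blast
    have eq: "poly q x = 0 \<longleftrightarrow> poly (pm ?s q) y = 0" if "ov ?K q" for q
      using alg_equiv[OF sK hs p pmin y that] .
    have "alg ?K y"
      using alg_trans[OF sK pm_ov[OF sK hs sacl p(1)] _ y] pm_eq0[OF sK hs p(1)] p(2) by simp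
    then have yalg: "alg L y" if "?K \<subseteq> L" for L using alg_mono that by blast
    show ?thesis using extend_good[OF g eq yalg] by auto
  next
    case False
    have eq: "poly q x = 0 \<longleftrightarrow> poly (pm ?s q) x = 0" if q: "ov ?K q" for q
    proof
      assume "poly q x = 0"
      then have "q = 0" using False q unfolding alg_def by blast
      then show "poly (pm ?s q) x = 0" by simp
    next
      assume r: "poly (pm ?s q) x = 0"
      have "pm ?s q = 0"
      proof (rule ccontr)
        assume "pm ?s q \<noteq> 0"
        then have "alg ?K x" using alg_trans[OF sK pm_ov[OF sK hs sacl q] _ r] by simp
        then show False using False by simp
      qed
      then have "q = 0" using pm_eq0[OF sK hs q] by simp
      then show "poly q x = 0" by simp
    qed
    have yalg: "alg L x" if "sf L" "x \<in> L" for L using alg_self that by blast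
    show ?thesis using extend_good[OF g eq yalg] by auto
  qed
qed

lemma chain_good:
  assumes ne: "C \<noteq> {}" and gC: "\<And>G. G \<in> C \<Longrightarrow> good G" and ch: "chain\<^sub>\<subseteq> C"
  shows "good (\<Union>C)"
proof -
  let ?U = "\<Union>C"
  have cmp: "G1 \<subseteq> G2 \<or> G2 \<subseteq> G1" if "G1 \<in> C" "G2 \<in> C" for G1 G2
    using ch that unfolding chain_subset_def by blast
  have fU: "functional ?U" unfolding functional_def
  proof (intro allI impI)
    fix k v w assume "(k, v) \<in> ?U" "(k, w) \<in> ?U"
    then obtain G1 G2 where G12: "G1 \<in> C" "G2 \<in> C" "(k, v) \<in> G1" "(k, w) \<in> G2" by blast
    then have "\<exists>G\<in>C. (k, v) \<in> G \<and> (k, w) \<in> G" using cmp[OF G12(1,2)] by blast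
    then obtain G where G: "G \<in> C" "(k, v) \<in> G" "(k, w) \<in> G" by blast
    have "functional G" using goodD(1)[OF gC[OF G(1)]] .
    then show "v = w" using G(2,3) unfolding functional_def by blast
  qed
  have fnU: "fn ?U k = fn G k" if GC: "G \<in> C" "k \<in> Domain G" for G k
  proof -
    have "(k, fn G k) \<in> ?U" using fn_mem[OF GC(2)] GC(1) by blast
    then show ?thesis using fn_eq[OF fU] by blast
  qed
  have two: "\<exists>G\<in>C. a \<in> Domain G \<and> b \<in> Domain G" if ab: "a \<in> Domain ?U" "b \<in> Domain ?U" for a b
  proof -
    obtain G1 where G1: "G1 \<in> C" "a \<in> Domain G1" using ab(1) by blast
    obtain G2 where G2: "G2 \<in> C" "b \<in> Domain G2" using ab(2) by blast
    show ?thesis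
    proof (cases "G1 \<subseteq> G2")
      case True then show ?thesis using G1 G2 by blast
    next
      case False then have "G2 \<subseteq> G1" using cmp[OF G1(1) G2(1)] by blast
      then show ?thesis using G1 G2 by blast
    qed
  qed
  have DU: "Domain G \<subseteq> Domain ?U" if "G \<in> C" for G using that by blast
  obtain G0 where G0: "G0 \<in> C" using ne by blast
  have sU: "sf (Domain ?U)" unfolding sf_def
  proof (intro conjI ballI)
    show "0 \<in> Domain ?U" "1 \<in> Domain ?U" using sfD(1,2)[OF goodD(2)[OF gC[OF G0]]] DU[OF G0] by auto
  next
    fix a b assume "a \<in> Domain ?U" "b \<in> Domain ?U"
    then obtain G where G: "G \<in> C" "a \<in> Domain G" "b \<in> Domain G" using two by blast
    show "a + b \<in> Domain ?U" "a * b \<in> Domain ?U"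
      using sfD(3,4)[OF goodD(2)[OF gC[OF G(1)]] G(2,3)] DU[OF G(1)] by auto
  next
    fix a assume "a \<in> Domain ?U"
    then obtain G where G: "G \<in> C" "a \<in> Domain G" by blast
    show "- a \<in> Domain ?U" "inverse a \<in> Domain ?U"
      using sfD(5,6)[OF goodD(2)[OF gC[OF G(1)]] G(2)] DU[OF G(1)] by auto
  qed
  have hU: "hom_on (Domain ?U) (fn ?U)" unfolding hom_on_def
  proof (intro conjI ballI)
    have "1 \<in> Domain G0" using sfD(2)[OF goodD(2)[OF gC[OF G0]]] .
    then show "fn ?U 1 = 1" using fnU[OF G0] hom_1[OF goodD(3)[OF gC[OF G0]]] by simp
  next
    fix a b assume "a \<in> Domain ?U" "b \<in> Domain ?U"
    then obtain G where G: "G \<in> C" "a \<in> Domain G" "b \<in> Domain G" using two by blast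
    have sG: "sf (Domain G)" and hG: "hom_on (Domain G) (fn G)" using goodD[OF gC[OF G(1)]] by auto
    have ab: "a + b \<in> Domain G" "a * b \<in> Domain G" using sfD(3,4)[OF sG G(2,3)] by auto
    show "fn ?U (a + b) = fn ?U a + fn ?U b"
      using fnU[OF G(1)] G ab hom_add[OF hG G(2,3)] by simp
    show "fn ?U (a * b) = fn ?U a * fn ?U b"
      using fnU[OF G(1)] G ab hom_mult[OF hG G(2,3)] by simp
  qed
  have aU: "alg (Domain ?U) (fn ?U k)" if kU: "k \<in> Domain ?U" for k
  proof -
    obtain G where G: "G \<in> C" "k \<in> Domain G" using kU by blast
    then show ?thesis using goodD(4)[OF gC[OF G(1)] G(2)] fnU[OF G] alg_mono[OF DU[OF G(1)]] by simp
  qed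
  show ?thesis unfolding good_def using fU sU hU aU by blast
qed

lemma zorn_ext:
  assumes g0: "good G0"
  shows "\<exists>s. field_endo s \<and> (\<forall>k v. (k, v) \<in> G0 \<longrightarrow> s k = v)"
proof -
  define A where "A = {G. good G \<and> G0 \<subseteq> G}"
  have "\<forall>C\<in>chains A. \<exists>U\<in>A. \<forall>Y\<in>C. Y \<subseteq> U"
  proof
    fix C assume C: "C \<in> chains A"
    then have CA: "C \<subseteq> A" and chC: "chain\<^sub>\<subseteq> C" unfolding chains_def by auto
    show "\<exists>U\<in>A. \<forall>Y\<in>C. Y \<subseteq> U"
    proof (cases "C = {}")
      case True
      have "G0 \<in> A" using g0 unfolding A_def by blast
      then show ?thesis using True by blast
    next
      case False
      have "good (\<Union>C)"
      proof (rule chain_good[OF False _ chC])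
        fix G assume "G \<in> C" then show "good G" using CA unfolding A_def by blast
      qed
      moreover obtain G1 where "G1 \<in> C" using False by blast
      then have "G0 \<subseteq> \<Union>C" using CA unfolding A_def by blast
      ultimately have "\<Union>C \<in> A" unfolding A_def by blast
      then show ?thesis by blast
    qed
  qed
  from Zorn_Lemma2[OF this] obtain M where M: "M \<in> A" and Mmax: "\<forall>Y\<in>A. M \<subseteq> Y \<longrightarrow> Y = M"
    by blast
  have gM: "good M" and G0M: "G0 \<subseteq> M" using M unfolding A_def by auto
  have DM: "Domain M = UNIV"
  proof (rule ccontr)
    assume "Domain M \<noteq> UNIV"
    then obtain x where x: "x \<notin> Domain M" by blast
    obtain G' where G': "good G'" "M \<subseteq> G'" "x \<in> Domain G'" using next_step[OF gM] by blast
    then have "G' \<in> A" using G0M unfolding A_def by auto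
    then have "G' = M" using Mmax G'(2) by blast
    then show False using x G'(3) by simp
  qed
  have "hom_on UNIV (fn M)" using goodD(3)[OF gM] DM by simp
  then have "field_endo (fn M)" unfolding hom_on_def field_endo_def by simp
  moreover have "fn M k = v" if kv: "(k, v) \<in> G0" for k v
    using fn_eq[OF goodD(1)[OF gM]] kv G0M by auto
  ultimately show ?thesis by blast
qed



lemma pm_fix: "sf K \<Longrightarrow> ov K q \<Longrightarrow> (\<And>k. k \<in> K \<Longrightarrow> f k = k) \<Longrightarrow> pm f q = q"
proof -
  assume sK: "sf K" and q: "ov K q" and f: "\<And>k. k \<in> K \<Longrightarrow> f k = k"
  have f0: "f 0 = 0" using f sfD(1)[OF sK] by simp
  show ?thesis
    by (rule poly_eqI) (use q f f0 in \<open>simp add: coeff_map_poly ov_def\<close>)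
qed

lemma hom_id: "hom_on K id" unfolding hom_on_def by simp

lemma good_Q: "good (gr \<rat> id)"
  by (rule good_gr[OF sf_Rats hom_id]) (simp add: alg_self[OF sf_Rats])

lemma moves:
  assumes z: "(z::complex) \<notin> \<rat>"
  shows "\<exists>s. field_endo s \<and> s z \<noteq> z"
proof -
  let ?G = "gr \<rat> id"
  have DG: "Domain ?G = \<rat>" by (rule gr_Domain)
  have fG: "fn ?G k = k" if "k \<in> \<rat>" for k using gr_fn[OF that] by simp
  have pmG: "pm (fn ?G) q = q" if "ov \<rat> q" for q using pm_fix[OF sf_Rats that fG] by blast
  have hG: "hom_on \<rat> (fn ?G)" using goodD(3)[OF good_Q] DG by simp
  have "\<exists>y. y \<noteq> z \<and> (\<exists>G'. good G' \<and> ?G \<subseteq> G' \<and> (z, y) \<in> G')"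
  proof (cases "alg \<rat> z")
    case True
    then obtain p0 where "ov \<rat> p0 \<and> p0 \<noteq> 0 \<and> poly p0 z = 0" unfolding alg_def by blast
    then obtain p where p: "ov \<rat> p" "p \<noteq> 0" "poly p z = 0"
      and pmin: "\<And>q. ov \<rat> q \<Longrightarrow> q \<noteq> 0 \<Longrightarrow> poly q z = 0 \<Longrightarrow> degree p \<le> degree q"
      using ex_has_least_nat[of "\<lambda>q. ov \<rat> q \<and> q \<noteq> 0 \<and> poly q z = 0" p0 degree] by blast
    have dp0: "degree p \<noteq> 0"
    proof
      assume "degree p = 0"
      then obtain c where "p = [:c:]" by (metis degree_eq_zeroE)
      then show False using p by simp
    qed
    have dp1: "degree p \<noteq> 1"
    proof
      assume d1: "degree p = 1"
      have "poly p z = coeff p 0 + coeff p 1 * z"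
        unfolding poly_altdef d1 by simp
      moreover have "coeff p 1 \<noteq> 0" using d1 p(2) by (metis leading_coeff_0_iff)
      ultimately have c1: "coeff p 0 + coeff p 1 * z = 0" "coeff p 1 \<noteq> 0" using p(3) by auto
      then have "z * coeff p 1 = - coeff p 0" by (simp add: add_eq_0_iff2 mult.commute)
      then have "(- coeff p 0) / coeff p 1 = z * coeff p 1 / coeff p 1" by simp
      then have "z = (- coeff p 0) / coeff p 1" using c1(2) by simp
      moreover have "coeff p 0 \<in> \<rat>" "coeff p 1 \<in> \<rat>" using p(1) unfolding ov_def by auto
      ultimately show False using z by simp
    qed
    have "\<exists>y. y \<noteq> z \<and> poly p y = 0"
    proof (rule ccontr)
      assume "\<not> (\<exists>y. y \<noteq> z \<and> poly p y = 0)"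
      then have only: "\<And>y. poly p y = 0 \<Longrightarrow> y = z" by blast
      have "[:- z, 1:] dvd p" using p(3) poly_eq_0_iff_dvd by blast
      then obtain r where r: "p = [:- z, 1:] * r" by (rule dvdE)
      have rnz: "r \<noteq> 0" using r p(2) by auto
      have "degree ([:- z, 1:] * r) = degree [:- z, 1:] + degree r"
        by (rule degree_mult_eq) (use rnz in auto)
      then have "degree p = 1 + degree r" using r by simp
      then have "degree r \<noteq> 0" using dp1 by simp
      then have "\<not> constant (poly r)" unfolding constant_degree .
      then obtain w where w: "poly r w = 0" using fundamental_theorem_of_algebra by blast
      then have "poly p w = 0" using r by simp
      then have "w = z" using only by blast
      then have rz: "poly r z = 0" using w by simp
      have "pderiv p = [:- z, 1:] * pderiv r + r * pderiv [:- z, 1:]" unfolding r by (rule pderiv_mult)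
      moreover have "pderiv [:- z, 1:] = 1" by (simp add: pderiv_pCons)
      ultimately have "poly (pderiv p) z = 0" using rz by simp
      moreover have "ov \<rat> (pderiv p)" using ov_pderiv[OF sf_Rats p(1)] .
      moreover have "pderiv p \<noteq> 0"
      proof
        assume "pderiv p = 0"
        then have "degree p = 0" by (simp add: pderiv_eq_0_iff)
        then show False using dp0 by simp
      qed
      ultimately have "degree p \<le> degree (pderiv p)" using pmin by blast
      then show False using degree_pderiv[of p] dp0 by simp
    qed
    then obtain y where y: "y \<noteq> z" "poly p y = 0" by blast
    have yp: "poly (pm (fn ?G) p) y = 0" using y(2) by (simp add: pmG[OF p(1)])
    have eq: "poly q z = 0 \<longleftrightarrow> poly (pm (fn ?G) q) y = 0" if qG: "ov (Domain ?G) q" for q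
    proof -
      have q': "ov \<rat> q" using qG DG by simp
      show ?thesis by (rule alg_equiv[OF sf_Rats hG p pmin yp q'])
    qed
    have ay: "alg \<rat> y" unfolding alg_def using p(1,2) y(2) by blast
    have yalg: "alg L y" if LG: "Domain ?G \<subseteq> L" for L
    proof -
      have "\<rat> \<subseteq> L" using LG DG by simp
      then show ?thesis using alg_mono ay by blast
    qed
    obtain G' where "good G'" "?G \<subseteq> G'" "(z, y) \<in> G'" using extend_good[OF good_Q eq yalg] by blast
    then show ?thesis using y(1) by blast
  next
    case False
    have eq: "poly q z = 0 \<longleftrightarrow> poly (pm (fn ?G) q) (z + 1) = 0" if q: "ov (Domain ?G) q" for q
    proof -
      have q': "ov \<rat> q" using q DG by simp
      have "poly q z = 0 \<longleftrightarrow> q = 0" using False q' unfolding alg_def by auto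
      moreover have "poly q (z + 1) = 0 \<longleftrightarrow> q = 0"
      proof
        assume h: "poly q (z + 1) = 0"
        have ovc: "ov \<rat> (pcompose q [:1, 1:])"
          by (rule ov_pcompose[OF sf_Rats q']) (auto intro!: ov_pCons ov_0 sf_Rats)
        have "poly (pcompose q [:1, 1:]) z = 0" using h by (simp add: poly_pcompose add.commute)
        then have "pcompose q [:1, 1:] = 0" using False ovc unfolding alg_def by blast
        then show "q = 0" using pcompose_eq_0[of q "[:1, 1:]"] by simp
      qed simp
      ultimately show ?thesis using pmG[OF q'] by simp
    qed
    have yalg: "alg L (z + 1)" if sL: "sf L" "z \<in> L" for L
    proof -
      have "z + 1 \<in> L" using sfD(3)[OF sL(1) sL(2) sfD(2)[OF sL(1)]] .
      then show ?thesis using alg_self[OF sL(1)] by blast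
    qed
    obtain G' where "good G'" "?G \<subseteq> G'" "(z, z + 1) \<in> G'" using extend_good[OF good_Q eq yalg] by blast
    moreover have "z + 1 \<noteq> z" by simp
    ultimately show ?thesis by blast
  qed
  then obtain y G' where y: "y \<noteq> z" "good G'" "(z, y) \<in> G'" by blast
  obtain s where s: "field_endo s" "\<And>k v. (k, v) \<in> G' \<Longrightarrow> s k = v" using zorn_ext[OF y(2)] by blast
  show ?thesis using s y by blast
qed

lemma hat_sub_Q: "(hat_set :: complex set) \<subseteq> \<rat>"
proof
  fix z :: complex assume "z \<in> hat_set"
  then have hfix: "\<And>s. field_endo s \<Longrightarrow> s z = z" unfolding hat_set_def by blast
  show "z \<in> \<rat>"
  proof (rule ccontr)
    assume "z \<notin> \<rat>"
    then obtain s where "field_endo s" "s z \<noteq> z" using moves by blast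
    then show False using hfix by blast
  qed
qed

lemma tilde_sub_hat: "(tilde_set :: 'a::field set) \<subseteq> hat_set"
proof
  fix r :: 'a assume "r \<in> tilde_set"
  then obtain A where A: "adequate r A" unfolding tilde_set_def by blast
  show "r \<in> hat_set" unfolding hat_set_def
  proof (rule InterI)
    fix Y :: "'a set" assume "Y \<in> (\<lambda>\<sigma>. {x. \<sigma> x = x}) ` {\<sigma>. field_endo \<sigma>}"
    then obtain s :: "'a \<Rightarrow> 'a" where s: "field_endo s" "Y = {x. s x = x}" by blast
    have "respects_on A s" using s(1) unfolding respects_on_def field_endo_def by auto
    then have "s r = r" using A unfolding adequate_def by blast
    then show "r \<in> Y" using s(2) by simp
  qed
qed

lemma Q_sub_tilde: "\<rat> \<subseteq> (tilde_set :: complex set)"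
proof
  fix r :: complex assume "r \<in> \<rat>"
  then obtain a b where ab: "0 < b" "r = of_int a / of_int b" by (metis Rats_cases')
  define N where "N = \<bar>a\<bar> + b"
  define A where "A = insert r ((\<lambda>i. of_int i :: complex) ` {-N..N})"
  have N1: "1 \<le> N" using ab(1) unfolding N_def by simp
  have inA: "of_int i \<in> A" if iN: "\<bar>i\<bar> \<le> N" for i
    unfolding A_def by (rule insertI2, rule imageI) (use iN in auto)
  have "adequate r A" unfolding adequate_def
  proof (intro conjI allI impI)
    show "finite A" unfolding A_def by simp
    show "r \<in> A" unfolding A_def by simp
  next
    fix f assume f: "respects_on A f"
    have one: "1 \<in> A" using inA[of 1] N1 by simp
    have zero: "0 \<in> A" using inA[of 0] N1 by simp
    have f1: "f 1 = 1" using f one unfolding respects_on_def by blast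
    have fadd: "f (x + y) = f x + f y" if "x \<in> A" "y \<in> A" "x + y \<in> A" for x y
      using f that unfolding respects_on_def by blast
    have fmul: "f (x * y) = f x * f y" if "x \<in> A" "y \<in> A" "x * y \<in> A" for x y
      using f that unfolding respects_on_def by blast
    have f0: "f 0 = 0" using fadd[OF zero zero] zero by simp
    have fpos: "f (of_int (int n)) = of_int (int n)" if "int n \<le> N" for n
      using that
    proof (induction n)
      case 0 then show ?case using f0 by simp
    next
      case (Suc n)
      have "f (of_int (int n) + 1) = f (of_int (int n)) + f 1"
        by (rule fadd) (use inA[of "int n"] inA[of "int n + 1"] one Suc.prems in auto)
      then have "f (of_int (int n) + 1) = of_int (int n) + 1" using Suc f1 by simp
      moreover have "(of_int (int (Suc n)) :: complex) = of_int (int n) + 1" by simp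
      ultimately show ?case by metis
    qed
    have fint: "f (of_int i) = of_int i" if "\<bar>i\<bar> \<le> N" for i
    proof (cases "0 \<le> i")
      case True
      then show ?thesis using fpos[of "nat i"] that by simp
    next
      case False
      have "f (of_int i + of_int (- i)) = f (of_int i) + f (of_int (- i))"
        by (rule fadd) (use inA[of i] inA[of "- i"] that zero in auto)
      moreover have "f (of_int (- i)) = of_int (- i)" using fpos[of "nat (- i)"] that False by simp
      ultimately show ?thesis using f0 by simp
    qed
    have bA: "of_int b \<in> A" using inA[of b] ab(1) unfolding N_def by simp
    have aA: "of_int a \<in> A" using inA[of a] ab(1) unfolding N_def by simp
    have rb: "r * of_int b = of_int a" using ab by simp
    have rA: "r \<in> A" unfolding A_def by simp
    have "f (r * of_int b) = f r * f (of_int b)" by (rule fmul) (use rA bA aA rb in auto)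
    then have "of_int a = f r * of_int b" using rb fint[of a] fint[of b] ab(1) unfolding N_def by simp
    then have "f r * of_int b = r * of_int b" by (subst rb) simp
    moreover have "(of_int b :: complex) \<noteq> 0" using ab(1) by simp
    ultimately show "f r = r" by simp
  qed
  then show "r \<in> tilde_set" unfolding tilde_set_def by blast
qed

theorem corollary2:
  shows "(tilde_set :: complex set) = hat_set \<and> (hat_set :: complex set) = \<rat>"
  using Q_sub_tilde tilde_sub_hat hat_sub_Q by blast

end
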